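(* Let $G$ be a finite group and $H$ a subgroup such that $\mathcal{O}_G(H)$ is Boolean of rank $2$ with coatoms $M_1,M_2$. Then $|M_1:H|=2$ if and only if $|G:M_2|=2$.
   Context: $\mathcal{O}_G(H)=\{K\mid H\le K\le G\}$; Boolean of rank $2$ means isomorphic to the lattice of subsets of a $2$-element set; coatoms are the maximal elements of $\mathcal{O}_G(H)\setminus\{G\}$. *)

theory Defs
  imports "HOL-Algebra.Algebra"
begin

definition overgroups :: "('a, 'b) monoid_scheme \<Rightarrow> 'a set \<Rightarrow> 'a set set" where
  "overgroups G H = {K. subgroup K G \<and> H \<subseteq> K}"

definition boolean_rank2 :: "'a set set \<Rightarrow> bool" where
  "boolean_rank2 L \<longleftrightarrow> (\<exists>f. bij_betw f (Pow {0::nat, 1}) L \<and>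
      (\<forall>A\<in>Pow {0::nat, 1}. \<forall>B\<in>Pow {0::nat, 1}. f A \<subseteq> f B \<longleftrightarrow> A \<subseteq> B))"

definition coatoms :: "('a, 'b) monoid_scheme \<Rightarrow> 'a set \<Rightarrow> 'a set set" where
  "coatoms G H = {M \<in> overgroups G H - {carrier G}.
      \<forall>K \<in> overgroups G H - {carrier G}. M \<subseteq> K \<longrightarrow> K = M}"

definition sindex :: "('a, 'b) monoid_scheme \<Rightarrow> 'a set \<Rightarrow> 'a set \<Rightarrow> nat" where
  "sindex G K H = card (rcosets\<^bsub>G\<lparr>carrier := K\<rparr>\<^esub> H)"

end

theory Submission imports Defs begin

lemma index_card:
  assumes "group G" "subgroup K G" "subgroup H G" "H \<subseteq> K" "finite K"
  shows "sindex G K H * card H = card K"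
proof -
  interpret group G by fact
  have g: "group (G\<lparr>carrier := K\<rparr>)" using assms(2) subgroup.subgroup_is_group is_group by blast
  have s: "subgroup H (G\<lparr>carrier := K\<rparr>)" using subgroup_incl assms by blast
  show ?thesis using group.lagrange[OF g s] unfolding sindex_def order_def by simp
qed

lemma (in group) coset_card:
  assumes "subgroup H G" "x \<in> carrier G"
  shows "card (H #> x) = card H"
  by (metis assms card_rcosets_equal rcosetsI subgroup.subset)

lemma (in group) coset_disj:
  assumes "subgroup H G" "x \<in> carrier G" "x \<notin> H"
  shows "H \<inter> (H #> x) = {}"
proof -
  { fix y assume "y \<in> H" "y \<in> H #> x"
    then obtain h where h: "h \<in> H" "y = h \<otimes> x" unfolding r_coset_def by auto
    have hc: "h \<in> carrier G" using subgroup.mem_carrier[OF assms(1) h(1)] .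
    have "inv h \<otimes> y = x" using hc assms(2) h(2) by (metis inv_closed l_inv l_one m_assoc)
    moreover have "inv h \<otimes> y \<in> H"
      using subgroup.m_closed[OF assms(1) subgroup.m_inv_closed[OF assms(1) h(1)] \<open>y \<in> H\<close>] .
    ultimately have "x \<in> H" by simp
    with assms have False by simp }
  thus ?thesis by blast
qed

lemma (in group) two_cosets:
  assumes "subgroup H G" "subgroup K G" "H \<subseteq> K" "finite K" "x \<in> K" "x \<notin> H"
    "card K = 2 * card H"
  shows "K = H \<union> (H #> x)"
proof -
  have xc: "x \<in> carrier G" using subgroup.mem_carrier[OF assms(2,5)] .
  have sub: "H \<union> (H #> x) \<subseteq> K"
  proof
    fix y assume "y \<in> H \<union> (H #> x)"
    then show "y \<in> K"
    proof
      assume "y \<in> H" then show ?thesis using assms(3) by auto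
    next
      assume "y \<in> H #> x"
      then obtain h where "h \<in> H" "y = h \<otimes> x" unfolding r_coset_def by auto
      then show ?thesis using subgroup.m_closed[OF assms(2) subsetD[OF assms(3)] assms(5)] by simp
    qed
  qed
  have fH: "finite H" using finite_subset[OF _ assms(4)] sub by simp
  have fHx: "finite (H #> x)" using finite_subset[OF _ assms(4)] sub by simp
  have c1: "card (H \<union> (H #> x)) = card H + card (H #> x)"
    using card_Un_disjoint[OF fH fHx coset_disj[OF assms(1) xc assms(6)]] .
  have c2: "card H + card (H #> x) = card K" using coset_card[OF assms(1) xc] assms(7) by linarith
  have c3: "card (H \<union> (H #> x)) = card K" using c1 c2 by (rule trans)
  have "H \<union> (H #> x) = K" using card_subset_eq[OF assms(4) sub c3] .
  then show ?thesis by (rule sym)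
qed

lemma (in group) cancelA: "g \<in> carrier G \<Longrightarrow> m \<in> carrier G \<Longrightarrow> inv g \<otimes> (g \<otimes> m) = m"
  by (simp add: m_assoc[symmetric])
lemma (in group) cancelB: "g \<in> carrier G \<Longrightarrow> m \<in> carrier G \<Longrightarrow> g \<otimes> (inv g \<otimes> m) = m"
  by (simp add: m_assoc[symmetric])
lemma (in group) conj_elim: "y \<in> g <# S #> inv g \<Longrightarrow> \<exists>m\<in>S. y = g \<otimes> m \<otimes> inv g"
  unfolding l_coset_def r_coset_def by auto
lemma (in group) conj_mem: "m \<in> S \<Longrightarrow> g \<otimes> m \<otimes> inv g \<in> g <# S #> inv g"
  unfolding l_coset_def r_coset_def by auto

lemma (in group) main_abstract:
  assumes fin: "finite (carrier G)" and sH: "subgroup H G" and sM1: "subgroup M1 G"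
    and sM2: "subgroup M2 G" and HM1: "H \<subseteq> M1" and HM2: "H \<subseteq> M2"
    and I: "M1 \<inter> M2 = H" and n12: "\<not> M1 \<subseteq> M2" and n21: "\<not> M2 \<subseteq> M1"
    and ov: "\<And>K. subgroup K G \<Longrightarrow> H \<subseteq> K \<Longrightarrow> K = H \<or> K = M1 \<or> K = M2 \<or> K = carrier G"
  shows "card M1 = 2 * card H \<longleftrightarrow> card (carrier G) = 2 * card M2"
proof -
  obtain x where x: "x \<in> M1" "x \<notin> H" using n12 I by blast
  have xc: "x \<in> carrier G" using subgroup.mem_carrier[OF sM1 x(1)] .
  have xM2: "x \<notin> M2" using x I by blast
  have M1c: "M1 \<subseteq> carrier G" using subgroup.subset[OF sM1] .
  have M2c: "M2 \<subseteq> carrier G" using subgroup.subset[OF sM2] .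
  have Hc: "H \<subseteq> carrier G" using subgroup.subset[OF sH] .
  have fM1: "finite M1" using finite_subset[OF M1c fin] .
  have fM2: "finite M2" using finite_subset[OF M2c fin] .
  show ?thesis
  proof
    assume c: "card M1 = 2 * card H"
    have M1eq: "M1 = H \<union> (H #> x)" using two_cosets[OF sH sM1 HM1 fM1 x c] .
    have conjH: "inv x \<otimes> h \<otimes> x \<in> H" if h: "h \<in> H" for h
    proof (rule ccontr)
      assume nH: "inv x \<otimes> h \<otimes> x \<notin> H"
      have hc: "h \<in> carrier G" using subgroup.mem_carrier[OF sH h] .
      have "inv x \<otimes> h \<otimes> x \<in> M1"
        using subgroup.m_closed[OF sM1 subgroup.m_closed[OF sM1 subgroup.m_inv_closed[OF sM1 x(1)] subsetD[OF HM1 h]] x(1)] .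
      hence "inv x \<otimes> h \<otimes> x \<in> H #> x" using nH M1eq by blast
      then obtain h' where h': "h' \<in> H" "inv x \<otimes> h \<otimes> x = h' \<otimes> x" unfolding r_coset_def by auto
      have h'c: "h' \<in> carrier G" using subgroup.mem_carrier[OF sH h'(1)] .
      have "inv x \<otimes> h = h'" using h'(2) xc hc h'c by (metis inv_closed m_closed r_cancel)
      hence "inv x = h' \<otimes> inv h" using xc hc h'c by (metis inv_closed m_closed r_inv r_one m_assoc)
      hence "inv x \<in> H" using subgroup.m_closed[OF sH h'(1) subgroup.m_inv_closed[OF sH h]] by simp
      hence "inv (inv x) \<in> H" using subgroup.m_inv_closed[OF sH] by blast
      hence "x \<in> H" using xc by simp
      with x(2) show False by simp
    qed
    define K where "K = x <# M2 #> inv x"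
    have sK: "subgroup K G" using subgroup_conjugation_is_surj1[of "inv x" M2] xc sM2
      unfolding K_def by simp
    have HK: "H \<subseteq> K"
    proof
      fix h assume h: "h \<in> H"
      have hc: "h \<in> carrier G" using subgroup.mem_carrier[OF sH h] .
      have "x \<otimes> (inv x \<otimes> h \<otimes> x) \<otimes> inv x \<in> K"
        unfolding K_def by (rule conj_mem, rule subsetD[OF HM2 conjH[OF h]])
      moreover have "x \<otimes> (inv x \<otimes> h \<otimes> x) \<otimes> inv x = h"
        using xc hc by (simp add: m_assoc cancelB)
      ultimately show "h \<in> K" by simp
    qed
    have bkc: "inv x <# K #> x = M2"
      using subgroup_conjugation_is_surj0[of "inv x" M2] xc M2c unfolding K_def by simp
    have conj_sub: "M2 \<subseteq> S" if "\<forall>k\<in>K. inv x \<otimes> k \<otimes> x \<in> S" for S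
    proof
      fix y assume "y \<in> M2"
      hence "y \<in> inv x <# K #> inv (inv x)" using bkc xc by simp
      then obtain k where "k \<in> K" "y = inv x \<otimes> k \<otimes> inv (inv x)" using conj_elim by blast
      thus "y \<in> S" using that xc by simp
    qed
    have KM2: "K = M2"
    proof -
      have "K \<noteq> H"
      proof
        assume "K = H"
        hence "M2 \<subseteq> H" using conj_sub[of H] conjH by blast
        thus False using n21 HM1 by blast
      qed
      moreover have "K \<noteq> M1"
      proof
        assume "K = M1"
        have "\<forall>k\<in>K. inv x \<otimes> k \<otimes> x \<in> M1" using \<open>K = M1\<close> x(1)
          by (auto intro!: subgroup.m_closed[OF sM1] subgroup.m_inv_closed[OF sM1])
        hence "M2 \<subseteq> M1" using conj_sub[of M1] by blast
        thus False using n21 by blast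
      qed
      moreover have "K \<noteq> carrier G"
      proof
        assume KG: "K = carrier G"
        have "M1 \<subseteq> M2"
        proof
          fix m assume m: "m \<in> M1"
          have mc: "m \<in> carrier G" using subgroup.mem_carrier[OF sM1 m] .
          have "x \<otimes> m \<otimes> inv x \<in> K" using KG xc mc by simp
          hence "inv x \<otimes> (x \<otimes> m \<otimes> inv x) \<otimes> inv (inv x) \<in> inv x <# K #> inv (inv x)"
            by (rule conj_mem)
          moreover have "inv x \<otimes> (x \<otimes> m \<otimes> inv x) \<otimes> inv (inv x) = m"
            using xc mc by (simp add: m_assoc cancelA)
          ultimately show "m \<in> M2" using bkc xc by simp
        qed
        thus False using n12 by blast
      qed
      ultimately show ?thesis using ov[OF sK HK] by blast
    qed
    define N where "N = normalizer G M2"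
    have sN: "subgroup N G" unfolding N_def using normalizer_imp_subgroup[OF M2c] .
    have memN: "g \<in> N \<longleftrightarrow> g \<in> carrier G \<and> g <# M2 #> inv g = M2" for g
      unfolding N_def normalizer_def stabilizer_def using M2c by auto
    have xN: "x \<in> N" using memN xc KM2 unfolding K_def by simp
    have M2N: "M2 \<subseteq> N"
    proof
      fix n assume n: "n \<in> M2"
      have nc: "n \<in> carrier G" using subgroup.mem_carrier[OF sM2 n] .
      have "n <# M2 = M2" using coset_join3[OF nc sM2 n] .
      moreover have "M2 #> inv n = M2"
        using coset_join2[OF inv_closed[OF nc] sM2 subgroup.m_inv_closed[OF sM2 n]] .
      ultimately show "n \<in> N" using memN nc by simp
    qed
    have M1N: "M1 \<subseteq> N"
    proof
      fix m assume "m \<in> M1"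
      hence "m \<in> H \<or> m \<in> H #> x" using M1eq by blast
      thus "m \<in> N"
      proof
        assume "m \<in> H" thus ?thesis using M2N HM2 by blast
      next
        assume "m \<in> H #> x"
        then obtain h where "h \<in> H" "m = h \<otimes> x" unfolding r_coset_def by auto
        thus ?thesis using subgroup.m_closed[OF sN _ xN, of h] M2N HM2 by blast
      qed
    qed
    have NG: "N = carrier G"
    proof -
      have "N \<noteq> H" using xN x(2) by blast
      moreover have "N \<noteq> M1" using M2N n21 by blast
      moreover have "N \<noteq> M2" using xN xM2 by blast
      moreover have "H \<subseteq> N" using HM2 M2N by blast
      ultimately show ?thesis using ov[OF sN] by blast
    qed
    have nM2: "M2 \<lhd> G"
      unfolding normal_inv_iff
    proof (intro conjI ballI)
      show "subgroup M2 G" by (rule sM2)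
      fix g h assume g: "g \<in> carrier G" and h: "h \<in> M2"
      have "g \<otimes> h \<otimes> inv g \<in> g <# M2 #> inv g" using h by (rule conj_mem)
      moreover have "g <# M2 #> inv g = M2" using memN[of g] g NG by blast
      ultimately show "g \<otimes> h \<otimes> inv g \<in> M2" by simp
    qed
    have sP: "subgroup (M2 <#> M1) G" using mult_norm_subgroup[OF nM2 sM1] .
    have M1P: "M1 \<subseteq> M2 <#> M1"
    proof
      fix m assume m: "m \<in> M1"
      have "\<one> \<otimes> m \<in> M2 <#> M1" unfolding set_mult_def using m subgroup.one_closed[OF sM2] by blast
      thus "m \<in> M2 <#> M1" using subgroup.mem_carrier[OF sM1 m] by simp
    qed
    have M2P: "M2 \<subseteq> M2 <#> M1"
    proof
      fix m assume m: "m \<in> M2"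
      have "m \<otimes> \<one> \<in> M2 <#> M1" unfolding set_mult_def using m subgroup.one_closed[OF sM1] by blast
      thus "m \<in> M2 <#> M1" using subgroup.mem_carrier[OF sM2 m] by simp
    qed
    have PG: "M2 <#> M1 = carrier G"
    proof -
      have "M2 <#> M1 \<noteq> H" using M2P n21 HM1 by blast
      moreover have "M2 <#> M1 \<noteq> M1" using M2P n21 by blast
      moreover have "M2 <#> M1 \<noteq> M2" using M1P n12 by blast
      moreover have "H \<subseteq> M2 <#> M1" using HM1 M1P by blast
      ultimately show ?thesis using ov[OF sP] by blast
    qed
    have GU: "carrier G \<subseteq> M2 \<union> (M2 #> x)"
    proof
      fix g assume "g \<in> carrier G"
      hence "g \<in> M2 <#> M1" using PG by simp
      then obtain n m where nm: "n \<in> M2" "m \<in> M1" "g = n \<otimes> m" unfolding set_mult_def by auto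
      have nc: "n \<in> carrier G" using subgroup.mem_carrier[OF sM2 nm(1)] .
      from nm(2) have "m \<in> H \<or> m \<in> H #> x" using M1eq by blast
      thus "g \<in> M2 \<union> (M2 #> x)"
      proof
        assume "m \<in> H"
        hence "n \<otimes> m \<in> M2" using subgroup.m_closed[OF sM2 nm(1)] HM2 by blast
        thus ?thesis using nm(3) by simp
      next
        assume "m \<in> H #> x"
        then obtain h where h: "h \<in> H" "m = h \<otimes> x" unfolding r_coset_def by auto
        have hc: "h \<in> carrier G" using subgroup.mem_carrier[OF sH h(1)] .
        have "n \<otimes> h \<in> M2" using subgroup.m_closed[OF sM2 nm(1)] HM2 h(1) by blast
        moreover have "g = (n \<otimes> h) \<otimes> x" using nm(3) h(2) nc hc xc by (simp add: m_assoc)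
        ultimately have "g \<in> M2 #> x" unfolding r_coset_def by blast
        thus ?thesis by simp
      qed
    qed
    have UG: "M2 \<union> (M2 #> x) \<subseteq> carrier G" using M2c r_coset_subset_G[OF M2c xc] by simp
    have GE: "carrier G = M2 \<union> (M2 #> x)" using GU UG by (rule equalityI)
    have fMx: "finite (M2 #> x)" using finite_subset[OF r_coset_subset_G[OF M2c xc] fin] .
    have "card (M2 \<union> (M2 #> x)) = card M2 + card (M2 #> x)"
      using card_Un_disjoint[OF fM2 fMx coset_disj[OF sM2 xc xM2]] .
    also have "\<dots> = 2 * card M2" using coset_card[OF sM2 xc] by simp
    finally show "card (carrier G) = 2 * card M2" using GE by simp
  next
    assume c: "card (carrier G) = 2 * card M2"
    have GE: "carrier G = M2 \<union> (M2 #> x)"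
      using two_cosets[OF sM2 subgroup_self M2c fin xc xM2 c] .
    have sub1: "M1 \<subseteq> H \<union> (H #> x)"
    proof
      fix m assume m: "m \<in> M1"
      have mc: "m \<in> carrier G" using subgroup.mem_carrier[OF sM1 m] .
      show "m \<in> H \<union> (H #> x)"
      proof (cases "m \<in> M2")
        case True thus ?thesis using m I by blast
      next
        case False
        hence "m \<in> M2 #> x" using GE mc by blast
        then obtain n where n: "n \<in> M2" "m = n \<otimes> x" unfolding r_coset_def by auto
        have nc: "n \<in> carrier G" using subgroup.mem_carrier[OF sM2 n(1)] .
        have "n = m \<otimes> inv x" using n(2) nc xc by (simp add: m_assoc)
        hence "n \<in> M1" using subgroup.m_closed[OF sM1 m subgroup.m_inv_closed[OF sM1 x(1)]] by simp
        hence "n \<in> H" using n(1) I by blast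
        hence "m \<in> H #> x" using n(2) unfolding r_coset_def by blast
        thus ?thesis by simp
      qed
    qed
    have sub2: "H \<union> (H #> x) \<subseteq> M1"
    proof
      fix y assume "y \<in> H \<union> (H #> x)"
      then show "y \<in> M1"
      proof
        assume "y \<in> H" then show ?thesis using HM1 by auto
      next
        assume "y \<in> H #> x"
        then obtain h where "h \<in> H" "y = h \<otimes> x" unfolding r_coset_def by auto
        then show ?thesis using subgroup.m_closed[OF sM1 subsetD[OF HM1] x(1)] by simp
      qed
    qed
    have E: "M1 = H \<union> (H #> x)" using sub1 sub2 by (rule equalityI)
    have fH: "finite H" using finite_subset[OF Hc fin] .
    have fHx: "finite (H #> x)" using finite_subset[OF r_coset_subset_G[OF Hc xc] fin] .
    have "card (H \<union> (H #> x)) = card H + card (H #> x)"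
      using card_Un_disjoint[OF fH fHx coset_disj[OF sH xc x(2)]] .
    also have "\<dots> = 2 * card H" using coset_card[OF sH xc] by simp
    finally show "card M1 = 2 * card H" using E by simp
  qed
qed

lemma bool_struct:
  assumes "boolean_rank2 L" "H \<in> L" "\<forall>K\<in>L. H \<subseteq> K" "T \<in> L" "\<forall>K\<in>L. K \<subseteq> T"
    "\<forall>A\<in>L. \<forall>B\<in>L. A \<inter> B \<in> L"
  shows "\<exists>P Q. L = {H,P,Q,T} \<and> H \<subset> P \<and> H \<subset> Q \<and> P \<subset> T \<and> Q \<subset> T \<and> \<not> P \<subseteq> Q \<and> \<not> Q \<subseteq> P \<and> P \<inter> Q = H"
proof -
  obtain f where bij: "bij_betw f (Pow {0::nat, 1}) L" and
    ord: "\<forall>A\<in>Pow {0::nat, 1}. \<forall>B\<in>Pow {0::nat, 1}. f A \<subseteq> f B \<longleftrightarrow> A \<subseteq> B"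
    using assms(1) unfolding boolean_rank2_def by blast
  have P: "Pow {0::nat,1} = {{},{0},{1},{0,1}}" by (auto simp: Pow_insert)
  have L: "L = {f {}, f {0}, f {1}, f {0,1}}" using bij P unfolding bij_betw_def by auto
  have o: "\<And>A B. A \<in> Pow {0::nat,1} \<Longrightarrow> B \<in> Pow {0::nat,1} \<Longrightarrow> f A \<subseteq> f B \<longleftrightarrow> A \<subseteq> B"
    using ord by blast
  have ab: "f {} \<subseteq> f {0}" "f {} \<subseteq> f {1}" "f {0} \<subseteq> f {0,1}" "f {1} \<subseteq> f {0,1}"
    using o by auto
  have nab: "\<not> f {0} \<subseteq> f {}" "\<not> f {1} \<subseteq> f {}" "\<not> f {0,1} \<subseteq> f {0}" "\<not> f {0,1} \<subseteq> f {1}"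
     "\<not> f {0} \<subseteq> f {1}" "\<not> f {1} \<subseteq> f {0}"
    using o[of "{0}" "{}"] o[of "{1}" "{}"] o[of "{0,1}" "{0}"] o[of "{0,1}" "{1}"]
      o[of "{0}" "{1}"] o[of "{1}" "{0}"] by auto
  have H: "H = f {}"
    using assms(2,3) L nab ab by auto
  have T: "T = f {0,1}"
    using assms(4,5) L nab ab by auto
  have I: "f {0} \<inter> f {1} = f {}"
  proof -
    have "f {0} \<inter> f {1} \<in> L" using assms(6) L by auto
    moreover have "f {} \<subseteq> f {0} \<inter> f {1}" using ab by auto
    ultimately show ?thesis using L nab ab by auto
  qed
  show ?thesis
    apply (rule exI[of _ "f {0}"], rule exI[of _ "f {1}"])
    using L H T I ab nab by auto
qed


theorem lemma10p7:
  fixes G :: "('a, 'b) monoid_scheme"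
  assumes "group G" and "finite (carrier G)" and "subgroup H G"
    and "boolean_rank2 (overgroups G H)"
    and "coatoms G H = {M1, M2}" and "M1 \<noteq> M2"
  shows "sindex G M1 H = 2 \<longleftrightarrow> sindex G (carrier G) M2 = 2"
proof -
  interpret group G by fact
  let ?L = "overgroups G H"
  have HL: "H \<in> ?L" unfolding overgroups_def using assms(3) by simp
  have GL: "carrier G \<in> ?L" unfolding overgroups_def using subgroup_self subgroup.subset[OF assms(3)] by simp
  have low: "\<forall>K\<in>?L. H \<subseteq> K" unfolding overgroups_def by simp
  have up: "\<forall>K\<in>?L. K \<subseteq> carrier G"
  proof
    fix K assume "K \<in> ?L"
    hence "subgroup K G" by (simp add: overgroups_def)
    thus "K \<subseteq> carrier G" by (rule subgroup.subset)
  qed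
  have int: "\<forall>A\<in>?L. \<forall>B\<in>?L. A \<inter> B \<in> ?L"
  proof (intro ballI)
    fix A B assume "A \<in> ?L" "B \<in> ?L"
    hence "subgroup A G" "subgroup B G" "H \<subseteq> A" "H \<subseteq> B" by (simp_all add: overgroups_def)
    hence "subgroup (A \<inter> B) G" "H \<subseteq> A \<inter> B" using subgroups_Inter_pair by auto
    thus "A \<inter> B \<in> ?L" by (simp add: overgroups_def)
  qed
  obtain P Q where L: "?L = {H,P,Q,carrier G}" and f: "H \<subset> P" "H \<subset> Q" "P \<subset> carrier G" "Q \<subset> carrier G"
    "\<not> P \<subseteq> Q" "\<not> Q \<subseteq> P" "P \<inter> Q = H"
    using bool_struct[OF assms(4) HL low GL up int] by iprover
  have PL: "P \<in> ?L" and QL: "Q \<in> ?L" using L by auto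
  have "coatoms G H = {P, Q}"
  proof
    show "coatoms G H \<subseteq> {P, Q}"
    proof
      fix M assume M: "M \<in> coatoms G H"
      hence Mlab: "M \<in> ?L" "M \<noteq> carrier G" and mx: "\<forall>K \<in> ?L - {carrier G}. M \<subseteq> K \<longrightarrow> K = M"
        unfolding coatoms_def by auto
      have "M \<noteq> H"
      proof
        assume "M = H"
        hence "P = M" using mx PL f by blast
        thus False using \<open>M = H\<close> f by blast
      qed
      thus "M \<in> {P, Q}" using Mlab L by blast
    qed
  next
    show "{P, Q} \<subseteq> coatoms G H"
      unfolding coatoms_def using L f PL QL by auto
  qed
  hence PQ: "(M1 = P \<and> M2 = Q) \<or> (M1 = Q \<and> M2 = P)" using assms(5,6) by (metis doubleton_eq_iff)
  have sM1: "subgroup M1 G" and sM2: "subgroup M2 G" using PQ PL QL unfolding overgroups_def by auto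
  have HM1: "H \<subseteq> M1" and HM2: "H \<subseteq> M2" using PQ f by auto
  have I: "M1 \<inter> M2 = H" using PQ f by auto
  have n12: "\<not> M1 \<subseteq> M2" and n21: "\<not> M2 \<subseteq> M1" using PQ f by auto
  have ov: "K = H \<or> K = M1 \<or> K = M2 \<or> K = carrier G" if "subgroup K G" "H \<subseteq> K" for K
  proof -
    have "K \<in> ?L" unfolding overgroups_def using that by simp
    thus ?thesis using L PQ by blast
  qed
  have key: "card M1 = 2 * card H \<longleftrightarrow> card (carrier G) = 2 * card M2"
    using main_abstract[OF assms(2,3) sM1 sM2 HM1 HM2 I n12 n21 ov] by blast
  have fM1: "finite M1" using finite_subset[OF subgroup.subset[OF sM1] assms(2)] .
  have i1: "sindex G M1 H * card H = card M1" using index_card[OF assms(1) sM1 assms(3) HM1 fM1] .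
  have i2: "sindex G (carrier G) M2 * card M2 = card (carrier G)"
    using index_card[OF assms(1) subgroup_self sM2 subgroup.subset[OF sM2] assms(2)] .
  have p1: "card H > 0" using subgroup.finite_imp_card_positive[OF assms(3) assms(2)] .
  have p2: "card M2 > 0" using subgroup.finite_imp_card_positive[OF sM2 assms(2)] .
  have e1: "sindex G M1 H = 2 \<longleftrightarrow> card M1 = 2 * card H" using i1 p1 by (metis mult_right_cancel not_gr0)
  have e2: "sindex G (carrier G) M2 = 2 \<longleftrightarrow> card (carrier G) = 2 * card M2" using i2 p2 by (metis mult_right_cancel not_gr0)
  show ?thesis using e1 e2 key by simp
qed

end
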